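(* Let $H$ be a finite-dimensional Hopf algebra over a field $k$, $R\subseteq H$ a Hopf subalgebra, and let $I$ be the maximal Hopf ideal of $H$ contained in $R^+H$. If $K$ is the maximal normal Hopf subalgebra of $H$ contained in $R$, then $HK^+\subseteq I$. Conversely, if $I=HK^+$ for some Hopf subalgebra $K$ with $K\subseteq R\subseteq H$, then $K$ is normal in $H$.
   Context: For a Hopf subalgebra $C$, $C^+=\ker\varepsilon\cap C$. A Hopf ideal is a two-sided ideal $J$ which is a coideal ($\Delta(J)\subseteq J\otimes H+H\otimes J$, $\varepsilon(J)=0$) and stable under the antipode. A Hopf subalgebra $K$ of the finite-dimensional Hopf algebra $H$ is normal if $HK^+=K^+H$. *)

theory Defs
  imports Complex_Main
begin

text \<open>
  A finite-dimensional Hopf algebra over a field 'k is modelled on a type 'h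
  (the whole of H is UNIV :: 'h set).  The ring structure of 'h (class ring_1)
  is the multiplication and unit of H; scale is the k-vector space structure.
  Elements of the tensor powers of H are represented by finite formal sums
  (lists of pairs / triples), and two such formal sums are identified iff
  they agree under pairing with all k-linear functionals on H; this is the
  standard (injective) embedding of H (x) H into Bil(H*, H*), so this realizes
  the tensor product H (x) H (resp. H (x) H (x) H) faithfully.
\<close>

definition lfun :: "('k::field \<Rightarrow> 'h::ring_1 \<Rightarrow> 'h) \<Rightarrow> ('h \<Rightarrow> 'k) \<Rightarrow> bool" where
  "lfun scale f \<longleftrightarrow> Vector_Spaces.linear scale (*) f"

definition tpair :: "('h \<Rightarrow> 'k::field) \<Rightarrow> ('h \<Rightarrow> 'k) \<Rightarrow> ('h \<times> 'h) list \<Rightarrow> 'k" where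
  "tpair f g xs = (\<Sum>(a, b) \<leftarrow> xs. f a * g b)"

definition tpair3 :: "('h \<Rightarrow> 'k::field) \<Rightarrow> ('h \<Rightarrow> 'k) \<Rightarrow> ('h \<Rightarrow> 'k)
    \<Rightarrow> ('h \<times> 'h \<times> 'h) list \<Rightarrow> 'k" where
  "tpair3 f g h xs = (\<Sum>(a, b, c) \<leftarrow> xs. f a * g b * h c)"

definition teq :: "('k::field \<Rightarrow> 'h::ring_1 \<Rightarrow> 'h) \<Rightarrow> ('h \<times> 'h) list \<Rightarrow> ('h \<times> 'h) list \<Rightarrow> bool" where
  "teq scale xs ys \<longleftrightarrow> (\<forall>f g. lfun scale f \<and> lfun scale g \<longrightarrow> tpair f g xs = tpair f g ys)"

definition teq3 :: "('k::field \<Rightarrow> 'h::ring_1 \<Rightarrow> 'h) \<Rightarrow> ('h \<times> 'h \<times> 'h) list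
    \<Rightarrow> ('h \<times> 'h \<times> 'h) list \<Rightarrow> bool" where
  "teq3 scale xs ys \<longleftrightarrow> (\<forall>f g h. lfun scale f \<and> lfun scale g \<and> lfun scale h
      \<longrightarrow> tpair3 f g h xs = tpair3 f g h ys)"

definition hopf_algebra ::
  "('k::field \<Rightarrow> 'h::ring_1 \<Rightarrow> 'h) \<Rightarrow> ('h \<Rightarrow> ('h \<times> 'h) list) \<Rightarrow> ('h \<Rightarrow> 'k) \<Rightarrow> ('h \<Rightarrow> 'h) \<Rightarrow> bool"
where
  "hopf_algebra scale \<Delta> \<epsilon> S \<longleftrightarrow>
     \<comment> \<open>finite-dimensional k-algebra\<close>
     vector_space scale \<and>
     (\<exists>B. finite B \<and> module.span scale B = UNIV) \<and>
     (\<forall>c x y. scale c (x * y) = scale c x * y \<and> scale c (x * y) = x * scale c y) \<and>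
     \<comment> \<open>coalgebra\<close>
     (\<forall>x y. teq scale (\<Delta> (x + y)) (\<Delta> x @ \<Delta> y)) \<and>
     (\<forall>c x. teq scale (\<Delta> (scale c x)) (map (\<lambda>(a, b). (scale c a, b)) (\<Delta> x))) \<and>
     lfun scale \<epsilon> \<and>
     (\<forall>x. teq3 scale
            (concat (map (\<lambda>(a, b). map (\<lambda>(p, q). (p, q, b)) (\<Delta> a)) (\<Delta> x)))
            (concat (map (\<lambda>(a, b). map (\<lambda>(p, q). (a, p, q)) (\<Delta> b)) (\<Delta> x)))) \<and>
     (\<forall>x. (\<Sum>(a, b) \<leftarrow> \<Delta> x. scale (\<epsilon> a) b) = x) \<and>
     (\<forall>x. (\<Sum>(a, b) \<leftarrow> \<Delta> x. scale (\<epsilon> b) a) = x) \<and>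
     \<comment> \<open>bialgebra: \<Delta> and \<epsilon> are algebra maps\<close>
     (\<forall>x y. teq scale (\<Delta> (x * y))
              (concat (map (\<lambda>(a, b). map (\<lambda>(a', b'). (a * a', b * b')) (\<Delta> y)) (\<Delta> x)))) \<and>
     teq scale (\<Delta> 1) [(1, 1)] \<and>
     (\<forall>x y. \<epsilon> (x * y) = \<epsilon> x * \<epsilon> y) \<and> \<epsilon> 1 = 1 \<and>
     \<comment> \<open>antipode\<close>
     Vector_Spaces.linear scale scale S \<and>
     (\<forall>x. (\<Sum>(a, b) \<leftarrow> \<Delta> x. S a * b) = scale (\<epsilon> x) 1) \<and>
     (\<forall>x. (\<Sum>(a, b) \<leftarrow> \<Delta> x. a * S b) = scale (\<epsilon> x) 1)"

definition setprod :: "('k::field \<Rightarrow> 'h::ring_1 \<Rightarrow> 'h) \<Rightarrow> 'h set \<Rightarrow> 'h set \<Rightarrow> 'h set" where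
  "setprod scale A B = module.span scale {a * b | a b. a \<in> A \<and> b \<in> B}"

definition plus_part :: "('h \<Rightarrow> 'k::field) \<Rightarrow> 'h set \<Rightarrow> 'h set" where
  "plus_part \<epsilon> C = {c \<in> C. \<epsilon> c = 0}"

definition hopf_subalgebra ::
  "('k::field \<Rightarrow> 'h::ring_1 \<Rightarrow> 'h) \<Rightarrow> ('h \<Rightarrow> ('h \<times> 'h) list) \<Rightarrow> ('h \<Rightarrow> 'h) \<Rightarrow> 'h set \<Rightarrow> bool"
where
  "hopf_subalgebra scale \<Delta> S C \<longleftrightarrow>
     module.subspace scale C \<and> 1 \<in> C \<and> (\<forall>x\<in>C. \<forall>y\<in>C. x * y \<in> C) \<and>
     (\<forall>x\<in>C. \<exists>ys. set ys \<subseteq> C \<times> C \<and> teq scale (\<Delta> x) ys) \<and>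
     S ` C \<subseteq> C"

definition hopf_ideal ::
  "('k::field \<Rightarrow> 'h::ring_1 \<Rightarrow> 'h) \<Rightarrow> ('h \<Rightarrow> ('h \<times> 'h) list) \<Rightarrow> ('h \<Rightarrow> 'k) \<Rightarrow> ('h \<Rightarrow> 'h)
     \<Rightarrow> 'h set \<Rightarrow> bool"
where
  "hopf_ideal scale \<Delta> \<epsilon> S J \<longleftrightarrow>
     module.subspace scale J \<and> (\<forall>h x. x \<in> J \<longrightarrow> h * x \<in> J \<and> x * h \<in> J) \<and>
     (\<forall>x\<in>J. \<exists>ys. (\<forall>(a, b) \<in> set ys. a \<in> J \<or> b \<in> J) \<and> teq scale (\<Delta> x) ys) \<and>
     (\<forall>x\<in>J. \<epsilon> x = 0) \<and>
     S ` J \<subseteq> J"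

definition normal_hopf_subalgebra ::
  "('k::field \<Rightarrow> 'h::ring_1 \<Rightarrow> 'h) \<Rightarrow> ('h \<Rightarrow> ('h \<times> 'h) list) \<Rightarrow> ('h \<Rightarrow> 'k) \<Rightarrow> ('h \<Rightarrow> 'h)
     \<Rightarrow> 'h set \<Rightarrow> bool"
where
  "normal_hopf_subalgebra scale \<Delta> \<epsilon> S K \<longleftrightarrow>
     hopf_subalgebra scale \<Delta> S K \<and>
     setprod scale UNIV (plus_part \<epsilon> K) = setprod scale (plus_part \<epsilon> K) UNIV"

end

theory Submission
  imports Defs
begin

lemma sum_list_map_add: "(\<Sum>x\<leftarrow>xs. f x + g x) = (\<Sum>x\<leftarrow>xs. f x) + (\<Sum>x\<leftarrow>xs. (g x::'a::comm_monoid_add))"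
  by (induct xs) (auto simp: algebra_simps)

locale hopf =
  fixes s :: "'k::field \<Rightarrow> 'h::ring_1 \<Rightarrow> 'h"
    and \<Delta> :: "'h \<Rightarrow> ('h \<times> 'h) list" and \<epsilon> :: "'h \<Rightarrow> 'k" and S :: "'h \<Rightarrow> 'h"
  assumes H: "hopf_algebra s \<Delta> \<epsilon> S"
begin

lemma vs: "vector_space s" using H unfolding hopf_algebra_def by auto

sublocale vs: vector_space s by (rule vs)

lemma ex_basis: "\<exists>B. finite B \<and> vs.independent B \<and> vs.span B = UNIV"
proof -
  obtain B0 where B0: "finite B0" "vs.span B0 = UNIV" using H unfolding hopf_algebra_def by auto
  obtain B where "B \<subseteq> B0" "vs.independent B" "B0 \<subseteq> vs.span B"
    using vs.maximal_independent_subset[of B0] by auto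
  then show ?thesis using B0
    by (metis finite_subset top_le vs.span_mono vs.span_span)
qed

definition Bs where "Bs = (SOME B. finite B \<and> vs.independent B \<and> vs.span B = UNIV)"

lemma Bs: "finite Bs" "vs.independent Bs" "vs.span Bs = UNIV"
  using someI_ex[OF ex_basis] unfolding Bs_def by auto

definition coord :: "'h \<Rightarrow> 'h \<Rightarrow> 'k" where "coord b v = vs.representation Bs v b"

lemma expand: "(\<Sum>b\<in>Bs. s (coord b v) b) = v"
  unfolding coord_def using Bs by (intro vs.sum_representation_eq) auto

definition lin :: "('h \<Rightarrow> 'h) \<Rightarrow> bool" where
  "lin f \<longleftrightarrow> (\<forall>x y c. f (x + y) = f x + f y \<and> f (s c x) = s c (f x))"

definition linK :: "('h \<Rightarrow> 'k) \<Rightarrow> bool" where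
  "linK f \<longleftrightarrow> (\<forall>x y c. f (x + y) = f x + f y \<and> f (s c x) = c * f x)"

lemma lfun_linK: "lfun s f \<longleftrightarrow> linK f"
proof
  assume "lfun s f" then show "linK f" unfolding linK_def lfun_def Vector_Spaces.linear_iff by auto
next
  assume a: "linK f"
  have v: "vector_space ((*)::'k\<Rightarrow>'k\<Rightarrow>'k)" by unfold_locales (auto simp: algebra_simps)
  show "lfun s f" unfolding lfun_def
    using a vs v by (auto simp: linK_def Vector_Spaces.linear_iff)
qed

lemma linK_coord: "linK (coord b)"
  using vs.linear_representation[OF Bs(2,3), of b] unfolding lfun_linK[symmetric] lfun_def coord_def
  by simp

end

context hopf begin

lemmas Hax = H[unfolded hopf_algebra_def]

lemma ax_teq_add: "teq s (\<Delta> (x + y)) (\<Delta> x @ \<Delta> y)" using Hax by blast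
lemma ax_teq_scale: "teq s (\<Delta> (s c x)) (map (\<lambda>(a, b). (s c a, b)) (\<Delta> x))" using Hax by blast
lemma ax_eps: "lfun s \<epsilon>" using Hax by blast
lemma ax_coassoc: "teq3 s
            (concat (map (\<lambda>(a, b). map (\<lambda>(p, q). (p, q, b)) (\<Delta> a)) (\<Delta> x)))
            (concat (map (\<lambda>(a, b). map (\<lambda>(p, q). (a, p, q)) (\<Delta> b)) (\<Delta> x)))" using Hax by blast
lemma ax_counit_l: "(\<Sum>(a, b) \<leftarrow> \<Delta> x. s (\<epsilon> a) b) = x" using Hax by blast
lemma ax_counit_r: "(\<Sum>(a, b) \<leftarrow> \<Delta> x. s (\<epsilon> b) a) = x" using Hax by blast
lemma ax_mult: "teq s (\<Delta> (x * y))
              (concat (map (\<lambda>(a, b). map (\<lambda>(a', b'). (a * a', b * b')) (\<Delta> y)) (\<Delta> x)))" using Hax by blast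
lemma ax_unit: "teq s (\<Delta> 1) [(1, 1)]" using Hax by blast
lemma eps_mult: "\<epsilon> (x * y) = \<epsilon> x * \<epsilon> y" using Hax by blast
lemma eps_one: "\<epsilon> 1 = 1" using Hax by blast
lemma ax_S: "Vector_Spaces.linear s s S" using Hax by blast
lemma ax_anti_l: "(\<Sum>(a, b) \<leftarrow> \<Delta> x. S a * b) = s (\<epsilon> x) 1" using Hax by blast
lemma ax_anti_r: "(\<Sum>(a, b) \<leftarrow> \<Delta> x. a * S b) = s (\<epsilon> x) 1" using Hax by blast
lemma scale_mult_l: "s c x * y = s c (x * y)" using Hax by metis
lemma scale_mult_r: "x * s c y = s c (x * y)" using Hax by metis

lemma linK_eps: "linK \<epsilon>" using ax_eps lfun_linK by auto

lemma eps_add: "\<epsilon> (x + y) = \<epsilon> x + \<epsilon> y" and eps_scale: "\<epsilon> (s c x) = c * \<epsilon> x"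
  using linK_eps unfolding linK_def by auto

lemma coord_add: "coord b (x + y) = coord b x + coord b y" and coord_scale: "coord b (s c x) = c * coord b x"
  using linK_coord unfolding linK_def by auto

lemma S_add: "S (x + y) = S x + S y" and S_scale: "S (s c x) = s c (S x)"
  using ax_S unfolding Vector_Spaces.linear_iff by auto

lemma linK_zero: "linK f \<Longrightarrow> f 0 = 0"
  unfolding linK_def by (metis vs.scale_zero_left mult_zero_left)
lemma lin_zero: "lin f \<Longrightarrow> f 0 = 0"
  unfolding lin_def by (metis vs.scale_zero_left)
lemma linK_sum: "linK f \<Longrightarrow> f (\<Sum>i\<in>A. g i) = (\<Sum>i\<in>A. f (g i))"
  by (induct A rule: infinite_finite_induct) (auto simp: linK_zero linK_def)
lemma lin_sum: "lin f \<Longrightarrow> f (\<Sum>i\<in>A. g i) = (\<Sum>i\<in>A. f (g i))"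
  by (induct A rule: infinite_finite_induct) (auto simp: lin_zero lin_def)
lemma linK_sum_list: "linK f \<Longrightarrow> f (\<Sum>x\<leftarrow>xs. g x) = (\<Sum>x\<leftarrow>xs. f (g x))"
  by (induct xs) (auto simp: linK_zero linK_def)
lemma lin_sum_list: "lin f \<Longrightarrow> f (\<Sum>x\<leftarrow>xs. g x) = (\<Sum>x\<leftarrow>xs. f (g x))"
  by (induct xs) (auto simp: lin_zero lin_def)

lemma lin_expand: "lin f \<Longrightarrow> f v = (\<Sum>b\<in>Bs. s (coord b v) (f b))"
proof -
  assume "lin f"
  then have "f (\<Sum>b\<in>Bs. s (coord b v) b) = (\<Sum>b\<in>Bs. s (coord b v) (f b))"
    by (simp add: lin_sum) (simp add: lin_def)
  then show ?thesis by (simp add: expand)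
qed

lemma linK_expand: "linK f \<Longrightarrow> f v = (\<Sum>b\<in>Bs. coord b v * f b)"
proof -
  assume "linK f"
  then have "f (\<Sum>b\<in>Bs. s (coord b v) b) = (\<Sum>b\<in>Bs. coord b v * f b)"
    by (simp add: linK_sum) (simp add: linK_def)
  then show ?thesis by (simp add: expand)
qed

lemma S_zero: "S 0 = 0" using ax_S by (simp add: Vector_Spaces.linear_iff) (metis vs.scale_zero_left)

definition bil :: "('h \<Rightarrow> 'h \<Rightarrow> 'h) \<Rightarrow> bool" where
  "bil B \<longleftrightarrow> (\<forall>b. lin (\<lambda>a. B a b)) \<and> (\<forall>a. lin (B a))"

definition tril :: "('h \<Rightarrow> 'h \<Rightarrow> 'h \<Rightarrow> 'h) \<Rightarrow> bool" where
  "tril T \<longleftrightarrow> (\<forall>b c. lin (\<lambda>a. T a b c)) \<and> (\<forall>a c. lin (\<lambda>b. T a b c)) \<and> (\<forall>a b. lin (T a b))"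

lemma bil_l: "bil B \<Longrightarrow> lin (\<lambda>a. B a b)" and bil_r: "bil B \<Longrightarrow> lin (B a)"
  unfolding bil_def by auto
lemma tril_1: "tril T \<Longrightarrow> lin (\<lambda>a. T a b c)" and tril_2: "tril T \<Longrightarrow> lin (\<lambda>b. T a b c)"
  and tril_3: "tril T \<Longrightarrow> lin (T a b)"
  unfolding tril_def by auto

lemma bil_expand:
  assumes "bil B"
  shows "B a b = (\<Sum>i\<in>Bs. \<Sum>j\<in>Bs. s (coord i a * coord j b) (B i j))"
proof -
  have "B a b = (\<Sum>i\<in>Bs. s (coord i a) (B i b))"
    by (rule lin_expand[OF bil_l[OF assms]])
  also have "\<dots> = (\<Sum>i\<in>Bs. s (coord i a) (\<Sum>j\<in>Bs. s (coord j b) (B i j)))"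
    by (rule sum.cong[OF refl], subst lin_expand[OF bil_r[OF assms]], rule refl)
  also have "\<dots> = (\<Sum>i\<in>Bs. \<Sum>j\<in>Bs. s (coord i a * coord j b) (B i j))"
    by (simp add: vs.scale_sum_right)
  finally show ?thesis .
qed

lemma tril_expand:
  assumes "tril T"
  shows "T a b c = (\<Sum>i\<in>Bs. \<Sum>j\<in>Bs. \<Sum>k\<in>Bs. s (coord i a * coord j b * coord k c) (T i j k))"
proof -
  have "T a b c = (\<Sum>i\<in>Bs. s (coord i a) (T i b c))"
    by (rule lin_expand[OF tril_1[OF assms]])
  also have "\<dots> = (\<Sum>i\<in>Bs. s (coord i a) (\<Sum>j\<in>Bs. s (coord j b) (T i j c)))"
    by (rule sum.cong[OF refl], subst lin_expand[OF tril_2[OF assms]], rule refl)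
  also have "\<dots> = (\<Sum>i\<in>Bs. s (coord i a) (\<Sum>j\<in>Bs. s (coord j b) (\<Sum>k\<in>Bs. s (coord k c) (T i j k))))"
    by (intro sum.cong[OF refl] arg_cong[where f="s _"], subst lin_expand[OF tril_3[OF assms]], rule refl)
  also have "\<dots> = (\<Sum>i\<in>Bs. \<Sum>j\<in>Bs. \<Sum>k\<in>Bs. s (coord i a * coord j b * coord k c) (T i j k))"
    by (simp add: vs.scale_sum_right mult.assoc)
  finally show ?thesis .
qed

lemma list_bil:
  assumes "bil B"
  shows "(\<Sum>(a, b)\<leftarrow>xs. B a b) = (\<Sum>i\<in>Bs. \<Sum>j\<in>Bs. s (tpair (coord i) (coord j) xs) (B i j))"
proof (induct xs)
  case Nil then show ?case by (simp add: tpair_def)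
next
  case (Cons p xs)
  obtain a b where p: "p = (a, b)" by force
  show ?case using Cons
    by (simp add: p tpair_def bil_expand[OF assms, of a b] vs.scale_left_distrib sum.distrib)
qed

lemma list_tril:
  assumes "tril T"
  shows "(\<Sum>(a, b, c)\<leftarrow>xs. T a b c) =
    (\<Sum>i\<in>Bs. \<Sum>j\<in>Bs. \<Sum>k\<in>Bs. s (tpair3 (coord i) (coord j) (coord k) xs) (T i j k))"
proof (induct xs)
  case Nil then show ?case by (simp add: tpair3_def)
next
  case (Cons p xs)
  obtain a b c where p: "p = (a, b, c)" by (cases p) force
  show ?case using Cons
    by (simp add: p tpair3_def tril_expand[OF assms, of a b c] vs.scale_left_distrib sum.distrib)
qed

definition tp :: "'h \<Rightarrow> 'h \<Rightarrow> 'h \<Rightarrow> 'k" where "tp i j x = tpair (coord i) (coord j) (\<Delta> x)"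

definition sw :: "'h \<Rightarrow> ('h \<Rightarrow> 'h \<Rightarrow> 'h) \<Rightarrow> 'h" where
  "sw x B = (\<Sum>i\<in>Bs. \<Sum>j\<in>Bs. s (tp i j x) (B i j))"

lemma teq_coord: "teq s xs ys \<Longrightarrow> tpair (coord i) (coord j) xs = tpair (coord i) (coord j) ys"
  unfolding teq_def using linK_coord lfun_linK by blast

lemma sw_list: "bil B \<Longrightarrow> teq s (\<Delta> x) ys \<Longrightarrow> sw x B = (\<Sum>(a, b)\<leftarrow>ys. B a b)"
  unfolding sw_def tp_def by (simp add: list_bil teq_coord)

lemma teq_refl: "teq s xs xs" unfolding teq_def by auto

lemma sw_Delta: "bil B \<Longrightarrow> sw x B = (\<Sum>(a, b)\<leftarrow>\<Delta> x. B a b)"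
  using sw_list teq_refl by blast

lemma tpair_append: "tpair f g (xs @ ys) = tpair f g xs + tpair f g ys"
  unfolding tpair_def by simp

lemma tpair_scale: "linK f \<Longrightarrow> tpair f g (map (\<lambda>(a, b). (s c a, b)) xs) = c * tpair f g xs"
  unfolding tpair_def by (induct xs) (auto simp: linK_def algebra_simps)

lemma tp_add: "tp i j (x + y) = tp i j x + tp i j y"
  unfolding tp_def using teq_coord[OF ax_teq_add] tpair_append by simp

lemma tp_scale: "tp i j (s c x) = c * tp i j x"
  unfolding tp_def using teq_coord[OF ax_teq_scale] tpair_scale[OF linK_coord] by simp

lemma sw_add_x: "sw (x + y) B = sw x B + sw y B"
  unfolding sw_def by (simp add: tp_add vs.scale_left_distrib sum.distrib)

lemma sw_scale_x: "sw (s c x) B = s c (sw x B)"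
  unfolding sw_def by (simp add: tp_scale vs.scale_sum_right)

lemma sw_zero_x: "sw 0 B = 0"
  using sw_scale_x[of 0 0 B] by simp

lemma sw_sum_x: "sw (\<Sum>i\<in>A. f i) B = (\<Sum>i\<in>A. sw (f i) B)"
  by (induct A rule: infinite_finite_induct) (auto simp: sw_zero_x sw_add_x)

lemma sw_sum_list_x: "sw (\<Sum>i\<leftarrow>xs. f i) B = (\<Sum>i\<leftarrow>xs. sw (f i) B)"
  by (induct xs) (auto simp: sw_zero_x sw_add_x)

lemma sw_add_f: "sw x (\<lambda>a b. F a b + G a b) = sw x F + sw x G"
  unfolding sw_def by (simp add: vs.scale_right_distrib sum.distrib)

lemma sw_scale_f: "sw x (\<lambda>a b. s c (F a b)) = s c (sw x F)"
  unfolding sw_def by (simp add: vs.scale_sum_right mult.commute)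

lemma sw_zero_f: "sw x (\<lambda>a b. 0) = 0"
  unfolding sw_def by simp

lemma swap3: "(\<Sum>i\<in>A. \<Sum>j\<in>B. \<Sum>k\<in>C. f i j k) = (\<Sum>k\<in>C. \<Sum>i\<in>A. \<Sum>j\<in>B. f i j k)"
proof -
  have "(\<Sum>i\<in>A. \<Sum>j\<in>B. \<Sum>k\<in>C. f i j k) = (\<Sum>i\<in>A. \<Sum>k\<in>C. \<Sum>j\<in>B. f i j k)"
    by (rule sum.cong[OF refl], rule sum.swap)
  also have "\<dots> = (\<Sum>k\<in>C. \<Sum>i\<in>A. \<Sum>j\<in>B. f i j k)" by (rule sum.swap)
  finally show ?thesis .
qed

lemma swap4: "(\<Sum>i\<in>A. \<Sum>j\<in>B. \<Sum>k\<in>C. \<Sum>l\<in>D. f i j k l) = (\<Sum>k\<in>C. \<Sum>l\<in>D. \<Sum>i\<in>A. \<Sum>j\<in>B. f i j k l)"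
proof -
  have "(\<Sum>i\<in>A. \<Sum>j\<in>B. \<Sum>k\<in>C. \<Sum>l\<in>D. f i j k l) = (\<Sum>k\<in>C. \<Sum>i\<in>A. \<Sum>j\<in>B. \<Sum>l\<in>D. f i j k l)"
    by (rule swap3)
  also have "\<dots> = (\<Sum>k\<in>C. \<Sum>l\<in>D. \<Sum>i\<in>A. \<Sum>j\<in>B. f i j k l)"
    by (rule sum.cong[OF refl], rule swap3)
  finally show ?thesis .
qed

lemma sw_sum_f: "sw x (\<lambda>a b. \<Sum>i\<in>A. F i a b) = (\<Sum>i\<in>A. sw x (F i))"
proof -
  have "(\<Sum>i\<in>Bs. \<Sum>j\<in>Bs. s (tp i j x) (\<Sum>k\<in>A. F k i j)) = (\<Sum>i\<in>Bs. \<Sum>j\<in>Bs. \<Sum>k\<in>A. s (tp i j x) (F k i j))"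
    by (simp add: vs.scale_sum_right)
  also have "\<dots> = (\<Sum>k\<in>A. \<Sum>i\<in>Bs. \<Sum>j\<in>Bs. s (tp i j x) (F k i j))" by (rule swap3)
  finally show ?thesis unfolding sw_def .
qed

lemma sw_lin: "lin f \<Longrightarrow> f (sw x F) = sw x (\<lambda>a b. f (F a b))"
  unfolding sw_def by (simp add: lin_sum) (simp add: lin_def)

lemma sw_linK: "linK f \<Longrightarrow> f (sw x F) = (\<Sum>i\<in>Bs. \<Sum>j\<in>Bs. tp i j x * f (F i j))"
  unfolding sw_def by (simp add: linK_sum) (simp add: linK_def)

lemma sw_commute: "sw x (\<lambda>a b. sw y (F a b)) = sw y (\<lambda>c d. sw x (\<lambda>a b. F a b c d))"
proof -
  have "(\<Sum>i\<in>Bs. \<Sum>j\<in>Bs. s (tp i j x) (\<Sum>k\<in>Bs. \<Sum>l\<in>Bs. s (tp k l y) (F i j k l))) =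
     (\<Sum>i\<in>Bs. \<Sum>j\<in>Bs. \<Sum>k\<in>Bs. \<Sum>l\<in>Bs. s (tp i j x * tp k l y) (F i j k l))"
    by (simp add: vs.scale_sum_right)
  also have "\<dots> = (\<Sum>k\<in>Bs. \<Sum>l\<in>Bs. \<Sum>i\<in>Bs. \<Sum>j\<in>Bs. s (tp i j x * tp k l y) (F i j k l))" by (rule swap4)
  also have "\<dots> = (\<Sum>k\<in>Bs. \<Sum>l\<in>Bs. s (tp k l y) (\<Sum>i\<in>Bs. \<Sum>j\<in>Bs. s (tp i j x) (F i j k l)))"
    by (simp add: vs.scale_sum_right mult.commute)
  finally show ?thesis unfolding sw_def .
qed

lemma sw_cong: "(\<And>a b. F a b = G a b) \<Longrightarrow> sw x F = sw x G" by (simp add: sw_def)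

end

context hopf begin

lemma linD: "lin f \<Longrightarrow> f (x + y) = f x + f y" "lin f \<Longrightarrow> f (s c x) = s c (f x)"
  unfolding lin_def by auto
lemma linKD: "linK f \<Longrightarrow> f (x + y) = f x + f y" "linK f \<Longrightarrow> f (s c x) = c * f x"
  unfolding linK_def by auto
lemma bilD: "bil B \<Longrightarrow> B (x + y) b = B x b + B y b" "bil B \<Longrightarrow> B (s c x) b = s c (B x b)"
  "bil B \<Longrightarrow> B a (x + y) = B a x + B a y" "bil B \<Longrightarrow> B a (s c x) = s c (B a x)"
  unfolding bil_def lin_def by auto
lemma trilD: "tril T \<Longrightarrow> T (x + y) b c = T x b c + T y b c" "tril T \<Longrightarrow> T (s k x) b c = s k (T x b c)"
  "tril T \<Longrightarrow> T a (x + y) c = T a x c + T a y c" "tril T \<Longrightarrow> T a (s k x) c = s k (T a x c)"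
  "tril T \<Longrightarrow> T a b (x + y) = T a b x + T a b y" "tril T \<Longrightarrow> T a b (s k x) = s k (T a b x)"
  unfolding tril_def lin_def by auto

lemma trilF: "tril T \<Longrightarrow> T (x + y) = (\<lambda>b c. T x b c + T y b c)" "tril T \<Longrightarrow> T (s k x) = (\<lambda>b c. s k (T x b c))"
  by (intro ext, simp add: tril_def lin_def)+

lemma lin_sum_list2: "lin f \<Longrightarrow> f (\<Sum>(a, b)\<leftarrow>xs. g a b) = (\<Sum>(a, b)\<leftarrow>xs. f (g a b))"
  by (induct xs) (auto simp: lin_zero linD)

lemma inner1: "(\<Sum>(p, q)\<leftarrow>map (\<lambda>(a', b'). (f a a', g b b')) ys. B p q) = (\<Sum>(a', b')\<leftarrow>ys. B (f a a') (g b b'))"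
  by (induct ys) auto
lemma inner2: "(\<Sum>(p, q, r)\<leftarrow>map (\<lambda>(p, q). (p, q, b)) ys. T p q r) = (\<Sum>(p, q)\<leftarrow>ys. T p q b)"
  by (induct ys) auto
lemma inner3: "(\<Sum>(p, q, r)\<leftarrow>map (Pair a) ys. T p q r) = (\<Sum>(p, q)\<leftarrow>ys. T a p q)"
  by (induct ys) auto

lemma concat_sum1: "(\<Sum>(p, q)\<leftarrow>concat (map (\<lambda>(a, b). map (\<lambda>(a', b'). (f a a', g b b')) ys) xs). B p q) =
  (\<Sum>(a, b)\<leftarrow>xs. \<Sum>(a', b')\<leftarrow>ys. B (f a a') (g b b'))"
  by (induct xs) (auto simp: inner1 simp del: map_map)

lemma concat_sum2: "(\<Sum>(p, q, r)\<leftarrow>concat (map (\<lambda>(a, b). map (\<lambda>(p, q). (p, q, b)) (D a)) xs). T p q r) =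
  (\<Sum>(a, b)\<leftarrow>xs. \<Sum>(p, q)\<leftarrow>D a. T p q b)"
  by (induct xs) (auto simp: inner2 simp del: map_map)

lemma concat_sum3: "(\<Sum>(p, q, r)\<leftarrow>concat (map (\<lambda>(a, b). map (\<lambda>(p, q). (a, p, q)) (D b)) xs). T p q r) =
  (\<Sum>(a, b)\<leftarrow>xs. \<Sum>(p, q)\<leftarrow>D b. T a p q)"
  by (induct xs) (auto simp: inner3 simp del: map_map)

lemmas lin_simps = distrib_left distrib_right scale_mult_l scale_mult_r S_add S_scale eps_add eps_scale
  coord_add coord_scale vs.scale_left_distrib vs.scale_right_distrib vs.scale_scale
  sw_add_x sw_scale_x sw_add_f sw_scale_f

lemma sum_list_concat_map: "(\<Sum>p\<leftarrow>concat (map g xs). f p) = (\<Sum>x\<leftarrow>xs. \<Sum>p\<leftarrow>g x. f p)"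
  by (induct xs) auto

lemma sw_mult:
  assumes B: "bil B"
  shows "sw (x * y) B = sw x (\<lambda>a b. sw y (\<lambda>p q. B (a * p) (b * q)))"
proof -
  have b1: "bil (\<lambda>p q. B (a * p) (b * q))" for a b
    using B unfolding bil_def lin_def by (simp add: lin_simps bilD[OF B])
  have b2: "bil (\<lambda>a b. sw y (\<lambda>p q. B (a * p) (b * q)))"
    using B unfolding bil_def lin_def by (simp add: lin_simps bilD[OF B])
  have "sw (x * y) B = (\<Sum>(a, b)\<leftarrow>\<Delta> x. \<Sum>(a', b')\<leftarrow>\<Delta> y. B (a * a') (b * b'))"
    by (subst sw_list[OF B ax_mult]) (rule concat_sum1)
  also have "\<dots> = (\<Sum>(a, b)\<leftarrow>\<Delta> x. sw y (\<lambda>p q. B (a * p) (b * q)))"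
    by (simp add: sw_Delta[OF b1])
  also have "\<dots> = sw x (\<lambda>a b. sw y (\<lambda>p q. B (a * p) (b * q)))"
    by (simp add: sw_Delta[OF b2])
  finally show ?thesis .
qed

lemma sw_one: "bil B \<Longrightarrow> sw 1 B = B 1 1"
  by (subst sw_list[OF _ ax_unit]) auto

lemma sw_coassoc:
  assumes T: "tril T"
  shows "sw x (\<lambda>a b. sw a (\<lambda>p q. T p q b)) = sw x (\<lambda>a b. sw b (\<lambda>p q. T a p q))"
proof -
  have b1: "bil (\<lambda>p q. T p q b)" for b using T unfolding bil_def tril_def by auto
  have b2: "bil (\<lambda>p q. T a p q)" for a using T unfolding bil_def tril_def by auto
  have b3: "bil (\<lambda>a b. sw a (\<lambda>p q. T p q b))"
    unfolding bil_def lin_def by (simp add: lin_simps trilD[OF T] trilF[OF T])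
  have b4: "bil (\<lambda>a b. sw b (\<lambda>p q. T a p q))"
    unfolding bil_def lin_def by (simp add: lin_simps trilD[OF T] trilF[OF T])
  have "sw x (\<lambda>a b. sw a (\<lambda>p q. T p q b)) = (\<Sum>(a, b)\<leftarrow>\<Delta> x. \<Sum>(p, q)\<leftarrow>\<Delta> a. T p q b)"
    by (subst sw_Delta[OF b3]) (simp add: sw_Delta[OF b1])
  also have "\<dots> = (\<Sum>(p, q, r) \<leftarrow> concat (map (\<lambda>(a, b). map (\<lambda>(p, q). (p, q, b)) (\<Delta> a)) (\<Delta> x)). T p q r)"
    by (rule concat_sum2[symmetric])
  also have "\<dots> = (\<Sum>(p, q, r) \<leftarrow> concat (map (\<lambda>(a, b). map (\<lambda>(p, q). (a, p, q)) (\<Delta> b)) (\<Delta> x)). T p q r)"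
    using ax_coassoc[of x] linK_coord lfun_linK unfolding list_tril[OF T] teq3_def by simp
  also have "\<dots> = (\<Sum>(a, b)\<leftarrow>\<Delta> x. \<Sum>(p, q)\<leftarrow>\<Delta> b. T a p q)"
    by (rule concat_sum3)
  also have "\<dots> = sw x (\<lambda>a b. sw b (\<lambda>p q. T a p q))"
    by (subst sw_Delta[OF b4]) (simp add: sw_Delta[OF b2])
  finally show ?thesis .
qed

lemma sw_counit_l: "lin G \<Longrightarrow> sw x (\<lambda>a b. s (\<epsilon> a) (G b)) = G x"
proof -
  assume G: "lin G"
  have b: "bil (\<lambda>a b. s (\<epsilon> a) (G b))" unfolding bil_def lin_def by (simp add: lin_simps linD[OF G])
  have "G x = G (\<Sum>(a, b) \<leftarrow> \<Delta> x. s (\<epsilon> a) b)" by (simp add: ax_counit_l)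
  also have "\<dots> = (\<Sum>(a, b) \<leftarrow> \<Delta> x. s (\<epsilon> a) (G b))"
    by (simp add: lin_sum_list2[OF G] linD[OF G])
  finally show ?thesis by (simp add: sw_Delta[OF b])
qed

lemma sw_counit_r: "lin G \<Longrightarrow> sw x (\<lambda>a b. s (\<epsilon> b) (G a)) = G x"
proof -
  assume G: "lin G"
  have b: "bil (\<lambda>a b. s (\<epsilon> b) (G a))" unfolding bil_def lin_def by (simp add: lin_simps linD[OF G])
  have "G x = G (\<Sum>(a, b) \<leftarrow> \<Delta> x. s (\<epsilon> b) a)" by (simp add: ax_counit_r)
  also have "\<dots> = (\<Sum>(a, b) \<leftarrow> \<Delta> x. s (\<epsilon> b) (G a))"
    by (simp add: lin_sum_list2[OF G] linD[OF G])
  finally show ?thesis by (simp add: sw_Delta[OF b])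
qed

lemma sw_anti_l: "lin F \<Longrightarrow> sw x (\<lambda>a b. F (S a * b)) = s (\<epsilon> x) (F 1)"
proof -
  assume G: "lin F"
  have b: "bil (\<lambda>a b. F (S a * b))" unfolding bil_def lin_def by (simp add: lin_simps linD[OF G])
  have "s (\<epsilon> x) (F 1) = F (\<Sum>(a, b) \<leftarrow> \<Delta> x. S a * b)" by (simp add: ax_anti_l linD[OF G])
  also have "\<dots> = (\<Sum>(a, b) \<leftarrow> \<Delta> x. F (S a * b))"
    by (simp add: lin_sum_list2[OF G])
  finally show ?thesis by (simp add: sw_Delta[OF b])
qed

lemma sw_anti_r: "lin F \<Longrightarrow> sw x (\<lambda>a b. F (a * S b)) = s (\<epsilon> x) (F 1)"
proof -
  assume G: "lin F"
  have b: "bil (\<lambda>a b. F (a * S b))" unfolding bil_def lin_def by (simp add: lin_simps linD[OF G])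
  have "s (\<epsilon> x) (F 1) = F (\<Sum>(a, b) \<leftarrow> \<Delta> x. a * S b)" by (simp add: ax_anti_r linD[OF G])
  also have "\<dots> = (\<Sum>(a, b) \<leftarrow> \<Delta> x. F (a * S b))"
    by (simp add: lin_sum_list2[OF G])
  finally show ?thesis by (simp add: sw_Delta[OF b])
qed

lemma lin_id: "lin (\<lambda>x. x)" unfolding lin_def by simp
lemma lin_S: "lin S" unfolding lin_def by (simp add: S_add S_scale)

end

context hopf begin

lemma S_one: "S 1 = 1"
proof -
  have b: "bil (\<lambda>a b. S a * b)" unfolding bil_def lin_def by (simp add: lin_simps)
  have "sw 1 (\<lambda>a b. S a * b) = S 1" by (simp add: sw_one[OF b])
  moreover have "sw 1 (\<lambda>a b. S a * b) = 1" using sw_anti_l[OF lin_id, of 1] by (simp add: eps_one)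
  ultimately show ?thesis by simp
qed

lemma sw_linK_scalar: "linK g \<Longrightarrow> s (g (sw x F)) 1 = sw x (\<lambda>a b. s (g (F a b)) 1)"
proof -
  assume g: "linK g"
  have "lin (\<lambda>v. s (g v) 1)" unfolding lin_def by (simp add: linKD[OF g] lin_simps)
  then show ?thesis by (rule sw_lin)
qed

lemma scale_one_inj: "s a (1::'h) = s b 1 \<Longrightarrow> a = b"
  by simp

lemma eps_S: "\<epsilon> (S x) = \<epsilon> x"
proof -
  have "s (\<epsilon> (S x)) 1 = s (\<epsilon> (S (sw x (\<lambda>a b. s (\<epsilon> b) a)))) 1"
    by (simp add: sw_counit_r[OF lin_id])
  also have "\<dots> = sw x (\<lambda>a b. s (\<epsilon> (S (s (\<epsilon> b) a))) 1)"
    by (simp add: sw_lin[OF lin_S] sw_linK_scalar[OF linK_eps])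
  also have "\<dots> = sw x (\<lambda>a b. s (\<epsilon> (S a * b)) 1)"
    by (simp add: S_scale eps_scale eps_mult mult.commute)
  also have "\<dots> = s (\<epsilon> (sw x (\<lambda>a b. S a * b))) 1"
    by (simp add: sw_linK_scalar[OF linK_eps])
  also have "\<dots> = s (\<epsilon> x) 1"
    using sw_anti_l[OF lin_id, of x] by (simp add: eps_scale eps_one)
  finally show ?thesis by simp
qed

lemma lin_lmult: "lin (\<lambda>v. c * v)" and lin_rmult: "lin (\<lambda>v. v * c)"
  unfolding lin_def by (simp_all add: lin_simps)

lemma claim1:
  assumes F: "lin F"
  shows "sw v (\<lambda>a b. sw u (\<lambda>p q. F (S p * S a * (b * q)))) = s (\<epsilon> v * \<epsilon> u) (F 1)"
proof -
  have "sw v (\<lambda>a b. sw u (\<lambda>p q. F (S p * S a * (b * q)))) = sw u (\<lambda>p q. sw v (\<lambda>a b. F (S p * S a * (b * q))))"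
    by (rule sw_commute)
  also have "\<dots> = sw u (\<lambda>p q. sw v (\<lambda>a b. (\<lambda>z. F (S p * z * q)) (S a * b)))"
    by (simp add: mult.assoc)
  also have "\<dots> = sw u (\<lambda>p q. s (\<epsilon> v) (F (S p * q)))"
  proof (rule sw_cong)
    fix p q
    have "lin (\<lambda>z. F (S p * z * q))" unfolding lin_def by (simp add: lin_simps linD[OF F])
    then show "sw v (\<lambda>a b. (\<lambda>z. F (S p * z * q)) (S a * b)) = s (\<epsilon> v) (F (S p * q))"
      by (subst sw_anti_l) simp_all
  qed
  also have "\<dots> = s (\<epsilon> v) (s (\<epsilon> u) (F 1))"
    using sw_anti_l[OF F, of u] by (simp add: sw_scale_f)
  finally show ?thesis by (simp add: mult.commute)
qed

lemma claim2:
  assumes F: "lin F"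
  shows "sw w (\<lambda>b c. sw z (\<lambda>q r. F (b * q * S (c * r)))) = s (\<epsilon> w * \<epsilon> z) (F 1)"
proof -
  have b: "bil (\<lambda>u v. F (u * S v))" unfolding bil_def lin_def by (simp add: lin_simps linD[OF F])
  have "sw (w * z) (\<lambda>u v. F (u * S v)) = s (\<epsilon> (w * z)) (F 1)" by (rule sw_anti_r[OF F])
  then show ?thesis by (simp add: sw_mult[OF b] eps_mult)
qed

lemma S_mult: "S (x * y) = S y * S x"
proof -
  define \<Phi> where "\<Phi> a b c p q r = S p * S a * (b * q) * S (c * r)" for a b c p q r
  have t1: "tril (\<lambda>a b c. sw y (\<lambda>p z. sw z (\<lambda>q r. \<Phi> a b c p q r)))"
    unfolding tril_def lin_def \<Phi>_def by (simp add: lin_simps)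
  have t2: "tril (\<lambda>p q r. \<Phi> a b c p q r)" for a b c
    unfolding tril_def lin_def \<Phi>_def by (simp add: lin_simps)
  have A: "sw x (\<lambda>a w. sw y (\<lambda>p z. sw w (\<lambda>b c. sw z (\<lambda>q r. \<Phi> a b c p q r)))) =
           sw x (\<lambda>v c. sw y (\<lambda>u r. sw v (\<lambda>a b. sw u (\<lambda>p q. \<Phi> a b c p q r))))"
  proof -
    have "sw x (\<lambda>a w. sw y (\<lambda>p z. sw w (\<lambda>b c. sw z (\<lambda>q r. \<Phi> a b c p q r)))) =
          sw x (\<lambda>a w. sw w (\<lambda>b c. sw y (\<lambda>p z. sw z (\<lambda>q r. \<Phi> a b c p q r))))"
      by (rule sw_cong, rule sw_commute)
    also have "\<dots> = sw x (\<lambda>v c. sw v (\<lambda>a b. sw y (\<lambda>p z. sw z (\<lambda>q r. \<Phi> a b c p q r))))"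
      by (rule sw_coassoc[OF t1, symmetric])
    also have "\<dots> = sw x (\<lambda>v c. sw v (\<lambda>a b. sw y (\<lambda>u r. sw u (\<lambda>p q. \<Phi> a b c p q r))))"
      by (rule sw_cong, rule sw_cong, rule sw_coassoc[OF t2, symmetric])
    also have "\<dots> = sw x (\<lambda>v c. sw y (\<lambda>u r. sw v (\<lambda>a b. sw u (\<lambda>p q. \<Phi> a b c p q r))))"
      by (rule sw_cong, rule sw_commute)
    finally show ?thesis .
  qed
  have L: "sw x (\<lambda>a w. sw y (\<lambda>p z. sw w (\<lambda>b c. sw z (\<lambda>q r. \<Phi> a b c p q r)))) = S y * S x"
  proof -
    have "sw x (\<lambda>a w. sw y (\<lambda>p z. sw w (\<lambda>b c. sw z (\<lambda>q r. \<Phi> a b c p q r)))) =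
          sw x (\<lambda>a w. sw y (\<lambda>p z. s (\<epsilon> w * \<epsilon> z) (S p * S a)))"
      unfolding \<Phi>_def
    proof (rule sw_cong, rule sw_cong)
      fix a w p z
      show "sw w (\<lambda>b c. sw z (\<lambda>q r. S p * S a * (b * q) * S (c * r))) = s (\<epsilon> w * \<epsilon> z) (S p * S a)"
        using claim2[OF lin_lmult[of "S p * S a"], of w z] by (simp add: mult.assoc)
    qed
    also have "\<dots> = sw x (\<lambda>a w. s (\<epsilon> w) (sw y (\<lambda>p z. s (\<epsilon> z) (S p * S a))))"
      by (simp add: sw_scale_f[symmetric] vs.scale_scale mult.commute)
    also have "\<dots> = sw x (\<lambda>a w. s (\<epsilon> w) (S y * S a))"
    proof (rule sw_cong)
      fix a w
      have "lin (\<lambda>p. S p * S a)" unfolding lin_def by (simp add: lin_simps)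
      then show "s (\<epsilon> w) (sw y (\<lambda>p z. s (\<epsilon> z) (S p * S a))) = s (\<epsilon> w) (S y * S a)"
        by (simp add: sw_counit_r)
    qed
    also have "\<dots> = S y * S x"
      using sw_counit_r[of "\<lambda>a. S y * S a" x] unfolding lin_def by (simp add: lin_simps)
    finally show ?thesis .
  qed
  have R: "sw x (\<lambda>v c. sw y (\<lambda>u r. sw v (\<lambda>a b. sw u (\<lambda>p q. \<Phi> a b c p q r)))) = S (x * y)"
  proof -
    have "sw x (\<lambda>v c. sw y (\<lambda>u r. sw v (\<lambda>a b. sw u (\<lambda>p q. \<Phi> a b c p q r)))) =
          sw x (\<lambda>v c. sw y (\<lambda>u r. s (\<epsilon> v * \<epsilon> u) (S (c * r))))"
      unfolding \<Phi>_def
    proof (rule sw_cong, rule sw_cong)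
      fix v c u r
      show "sw v (\<lambda>a b. sw u (\<lambda>p q. S p * S a * (b * q) * S (c * r))) = s (\<epsilon> v * \<epsilon> u) (S (c * r))"
        using claim1[OF lin_rmult[of "S (c * r)"], of v u] by (simp add: mult.assoc)
    qed
    also have "\<dots> = sw x (\<lambda>v c. s (\<epsilon> v) (sw y (\<lambda>u r. s (\<epsilon> u) (S (c * r)))))"
      by (simp add: sw_scale_f[symmetric] vs.scale_scale)
    also have "\<dots> = sw x (\<lambda>v c. s (\<epsilon> v) (S (c * y)))"
    proof (rule sw_cong)
      fix v c
      have "lin (\<lambda>r. S (c * r))" unfolding lin_def by (simp add: lin_simps)
      then show "s (\<epsilon> v) (sw y (\<lambda>u r. s (\<epsilon> u) (S (c * r)))) = s (\<epsilon> v) (S (c * y))"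
        by (simp add: sw_counit_l)
    qed
    also have "\<dots> = S (x * y)"
      using sw_counit_l[of "\<lambda>c. S (c * y)" x] unfolding lin_def by (simp add: lin_simps)
    finally show ?thesis .
  qed
  show ?thesis using A L R by simp
qed

end

context hopf begin

lemma lin_sw_x: "lin (\<lambda>y. sw y C)" unfolding lin_def by (simp add: sw_add_x sw_scale_x)

lemma sw_sw: "sw w (\<lambda>a b. sw (f a b) C) = sw (sw w f) C"
  by (subst sw_lin[OF lin_sw_x]) (rule refl)

lemma S_comult:
  assumes B: "bil B"
  shows "sw (S x) B = sw x (\<lambda>a b. B (S b) (S a))"
proof -
  define \<Phi> where "\<Phi> a1 a2 p q u v = B (S a2 * p * u) (S a1 * q * v)" for a1 a2 p q u v
  define T where "T x1 x2 x3 = sw x1 (\<lambda>a1 a2. sw x2 (\<lambda>p q. sw (S x3) (\<lambda>u v. \<Phi> a1 a2 p q u v)))" for x1 x2 x3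
  have tT: "tril T" unfolding tril_def lin_def T_def \<Phi>_def by (simp add: lin_simps bilD[OF B])
  have Ei: "sw x (\<lambda>x1 w. sw w (\<lambda>x2 x3. T x1 x2 x3)) = sw x (\<lambda>a b. B (S b) (S a))"
  proof -
    have inner: "sw w (\<lambda>x2 x3. sw x2 (\<lambda>p q. sw (S x3) (\<lambda>u v. \<Phi> a1 a2 p q u v))) = s (\<epsilon> w) (B (S a2) (S a1))"
      for w a1 a2
    proof -
      define C where "C U V = B (S a2 * U) (S a1 * V)" for U V
      have bC: "bil C" unfolding bil_def lin_def C_def by (simp add: lin_simps bilD[OF B])
      have "sw w (\<lambda>x2 x3. sw x2 (\<lambda>p q. sw (S x3) (\<lambda>u v. \<Phi> a1 a2 p q u v))) = sw w (\<lambda>x2 x3. sw (x2 * S x3) C)"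
        by (simp add: sw_mult[OF bC] \<Phi>_def C_def mult.assoc)
      also have "\<dots> = sw (sw w (\<lambda>x2 x3. x2 * S x3)) C" by (rule sw_sw)
      also have "\<dots> = sw (s (\<epsilon> w) 1) C" using sw_anti_r[OF lin_id, of w] by simp
      also have "\<dots> = s (\<epsilon> w) (B (S a2) (S a1))" by (simp add: sw_scale_x sw_one[OF bC] C_def)
      finally show ?thesis .
    qed
    have "sw x (\<lambda>x1 w. sw w (\<lambda>x2 x3. T x1 x2 x3)) = sw x (\<lambda>x1 w. sw x1 (\<lambda>a1 a2. s (\<epsilon> w) (B (S a2) (S a1))))"
      unfolding T_def by (rule sw_cong, subst sw_commute, simp add: inner)
    also have "\<dots> = sw x (\<lambda>x1 w. s (\<epsilon> w) (sw x1 (\<lambda>a1 a2. B (S a2) (S a1))))"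
      by (simp add: sw_scale_f)
    also have "\<dots> = sw x (\<lambda>a b. B (S b) (S a))"
      by (rule sw_counit_r[OF lin_sw_x])
    finally show ?thesis .
  qed
  have Eii: "sw x (\<lambda>v' x3. sw v' (\<lambda>x1 x2. T x1 x2 x3)) = sw (S x) B"
  proof -
    have step: "sw v' (\<lambda>x1 x2. T x1 x2 x3) = s (\<epsilon> v') (sw (S x3) B)" for v' x3
    proof -
      define G where "G U V = sw (S x3) (\<lambda>u v. B (U * u) (V * v))" for U V
      have GL: "G (x + y) V = G x V + G y V" "G (s c x) V = s c (G x V)"
          "G U (x + y) = G U x + G U y" "G U (s c x) = s c (G U x)" for x y c U V
        unfolding G_def by (simp_all add: lin_simps bilD[OF B])
      define F where "F a1 a2 x2 = sw x2 (\<lambda>p q. G (S a2 * p) (S a1 * q))" for a1 a2 x2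
      have tF: "tril F" unfolding tril_def lin_def F_def by (simp add: lin_simps GL)
      have "sw v' (\<lambda>x1 x2. T x1 x2 x3) = sw v' (\<lambda>x1 x2. sw x1 (\<lambda>a1 a2. F a1 a2 x2))"
        unfolding T_def F_def G_def \<Phi>_def by (simp add: mult.assoc)
      also have "\<dots> = sw v' (\<lambda>a1 r. sw r (\<lambda>a2 x2. F a1 a2 x2))"
        by (rule sw_coassoc[OF tF])
      also have "\<dots> = sw v' (\<lambda>a1 r. G 1 (S a1 * r))"
      proof (rule sw_cong)
        fix a1 r
        have t2: "tril (\<lambda>a2 p q. G (S a2 * p) (S a1 * q))" unfolding tril_def lin_def by (simp add: lin_simps GL)
        have "sw r (\<lambda>a2 x2. F a1 a2 x2) = sw r (\<lambda>m q. sw m (\<lambda>a2 p. G (S a2 * p) (S a1 * q)))"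
          unfolding F_def by (rule sw_coassoc[OF t2, symmetric])
        also have "\<dots> = sw r (\<lambda>m q. s (\<epsilon> m) (G 1 (S a1 * q)))"
        proof (rule sw_cong)
          fix m q
          have "lin (\<lambda>z. G z (S a1 * q))" unfolding lin_def by (simp add: GL)
          then show "sw m (\<lambda>a2 p. G (S a2 * p) (S a1 * q)) = s (\<epsilon> m) (G 1 (S a1 * q))"
            by (rule sw_anti_l)
        qed
        also have "\<dots> = G 1 (S a1 * r)"
        proof -
          have "lin (\<lambda>q. G 1 (S a1 * q))" unfolding lin_def by (simp add: GL lin_simps)
          then show ?thesis by (rule sw_counit_l)
        qed
        finally show "sw r (\<lambda>a2 x2. F a1 a2 x2) = G 1 (S a1 * r)" .
      qed
      also have "\<dots> = s (\<epsilon> v') (G 1 1)"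
      proof -
        have "lin (\<lambda>z. G 1 z)" unfolding lin_def by (simp add: GL)
        then show ?thesis by (rule sw_anti_l)
      qed
      also have "\<dots> = s (\<epsilon> v') (sw (S x3) B)" unfolding G_def by simp
      finally show ?thesis .
    qed
    have "sw x (\<lambda>v' x3. sw v' (\<lambda>x1 x2. T x1 x2 x3)) = sw x (\<lambda>v' x3. s (\<epsilon> v') (sw (S x3) B))"
      by (simp add: step)
    also have "\<dots> = sw (S x) B"
    proof -
      have "lin (\<lambda>x3. sw (S x3) B)" unfolding lin_def by (simp add: lin_simps)
      then show ?thesis by (rule sw_counit_l)
    qed
    finally show ?thesis .
  qed
  have "sw x (\<lambda>x1 w. sw w (\<lambda>x2 x3. T x1 x2 x3)) = sw x (\<lambda>v' x3. sw v' (\<lambda>x1 x2. T x1 x2 x3))"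
    by (rule sw_coassoc[OF tT, symmetric])
  then show ?thesis using Ei Eii by simp
qed

end

context hopf begin

definition Tm :: "('h \<Rightarrow> 'k) \<Rightarrow> 'h \<Rightarrow> 'h" where "Tm m y = sw y (\<lambda>a b. s (m b) a)"

lemma lin_Tm: "lin (Tm m)" unfolding lin_def Tm_def by (simp add: sw_add_x sw_scale_x)

lemma Tm_add: "Tm m (x + y) = Tm m x + Tm m y" and Tm_scale: "Tm m (s c x) = s c (Tm m x)"
  using lin_Tm unfolding lin_def by auto

lemma rho:
  assumes m: "linK m"
  shows "Tm (\<lambda>w. m (w * S h)) y = sw h (\<lambda>a b. Tm m (y * S a) * b)"
proof -
  have "sw h (\<lambda>a b. Tm m (y * S a) * b) = sw h (\<lambda>a b. sw (y * S a) (\<lambda>u v. s (m v) (u * b)))"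
    unfolding Tm_def by (rule sw_cong) (simp add: sw_lin[OF lin_rmult] scale_mult_l)
  also have "\<dots> = sw h (\<lambda>a b. sw y (\<lambda>y1 y2. sw a (\<lambda>a1 a2. s (m (y2 * S a1)) (y1 * S a2 * b))))"
  proof (rule sw_cong)
    fix a b
    have b1: "bil (\<lambda>u v. s (m v) (u * b))" unfolding bil_def lin_def by (simp add: lin_simps linKD[OF m])
    have b2: "bil (\<lambda>u v. s (m (y2 * v)) (y1 * u * b))" for y1 y2
      unfolding bil_def lin_def by (simp add: lin_simps linKD[OF m])
    show "sw (y * S a) (\<lambda>u v. s (m v) (u * b)) = sw y (\<lambda>y1 y2. sw a (\<lambda>a1 a2. s (m (y2 * S a1)) (y1 * S a2 * b)))"
      by (simp add: sw_mult[OF b1] S_comult[OF b2])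
  qed
  also have "\<dots> = sw y (\<lambda>y1 y2. sw h (\<lambda>a b. sw a (\<lambda>a1 a2. s (m (y2 * S a1)) (y1 * S a2 * b))))"
    by (rule sw_commute)
  also have "\<dots> = sw y (\<lambda>y1 y2. s (m (y2 * S h)) y1)"
  proof (rule sw_cong)
    fix y1 y2
    have t: "tril (\<lambda>a1 a2 b. s (m (y2 * S a1)) (y1 * S a2 * b))"
      unfolding tril_def lin_def by (simp add: lin_simps linKD[OF m])
    have "sw h (\<lambda>a b. sw a (\<lambda>a1 a2. s (m (y2 * S a1)) (y1 * S a2 * b))) =
          sw h (\<lambda>a1 c. sw c (\<lambda>a2 b. s (m (y2 * S a1)) (y1 * S a2 * b)))"
      by (rule sw_coassoc[OF t])
    also have "\<dots> = sw h (\<lambda>a1 c. s (\<epsilon> c) (s (m (y2 * S a1)) y1))"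
    proof (rule sw_cong)
      fix a1 c
      have l: "lin (\<lambda>z. s (m (y2 * S a1)) (y1 * z))" unfolding lin_def by (simp add: lin_simps)
      show "sw c (\<lambda>a2 b. s (m (y2 * S a1)) (y1 * S a2 * b)) = s (\<epsilon> c) (s (m (y2 * S a1)) y1)"
        using sw_anti_l[OF l, of c] by (simp add: mult.assoc)
    qed
    also have "\<dots> = s (m (y2 * S h)) y1"
    proof -
      have "lin (\<lambda>a1. s (m (y2 * S a1)) y1)" unfolding lin_def by (simp add: lin_simps linKD[OF m])
      then show ?thesis by (rule sw_counit_r)
    qed
    finally show "sw h (\<lambda>a b. sw a (\<lambda>a1 a2. s (m (y2 * S a1)) (y1 * S a2 * b))) = s (m (y2 * S h)) y1" .
  qed
  also have "\<dots> = Tm (\<lambda>w. m (w * S h)) y" unfolding Tm_def by simp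
  finally show ?thesis by simp
qed

end

context hopf begin

definition integral :: "('h \<Rightarrow> 'k) \<Rightarrow> bool" where
  "integral l \<longleftrightarrow> linK l \<and> (\<forall>z. Tm l z = s (l z) 1)"

definition Q :: "'h \<Rightarrow> ('h \<Rightarrow> 'k) \<Rightarrow> 'h" where
  "Q x n = (\<Sum>b\<in>Bs. sw (Tm n b) (\<lambda>p q. s (coord b (x * S (S p))) q))"

lemma Q_int:
  assumes l: "integral l"
  shows "Q x (\<lambda>w. l (w * S h)) = s (l x) h"
proof -
  have lk: "linK l" using l unfolding integral_def by auto
  have Tn: "Tm (\<lambda>w. l (w * S h)) b = sw h (\<lambda>a c. s (l (b * S a)) c)" for b
    using rho[OF lk, of h b] l unfolding integral_def by (simp add: scale_mult_l)
  have "Q x (\<lambda>w. l (w * S h)) = (\<Sum>b\<in>Bs. sw h (\<lambda>a c. s (l (b * S a)) (sw c (\<lambda>p q. s (coord b (x * S (S p))) q))))"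
    unfolding Q_def Tn by (simp add: sw_sw[symmetric] sw_scale_x)
  also have "\<dots> = sw h (\<lambda>a c. sw c (\<lambda>p q. s (\<Sum>b\<in>Bs. coord b (x * S (S p)) * l (b * S a)) q))"
    by (simp add: sw_sum_f[symmetric] sw_scale_f[symmetric] vs.scale_sum_left vs.scale_scale mult.commute)
  also have "\<dots> = sw h (\<lambda>a c. sw c (\<lambda>p q. s (l (x * S (S p) * S a)) q))"
  proof -
    have "(\<Sum>b\<in>Bs. coord b w * l (b * S a)) = l (w * S a)" for w a
    proof -
      have "linK (\<lambda>b. l (b * S a))" unfolding linK_def by (simp add: lin_simps linKD[OF lk])
      then show ?thesis by (rule linK_expand[symmetric])
    qed
    then show ?thesis by simp
  qed
  also have "\<dots> = sw h (\<lambda>u c. sw u (\<lambda>a p. s (l (x * S (S p) * S a)) c))"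
  proof -
    have t: "tril (\<lambda>a p q. s (l (x * S (S p) * S a)) q)"
      unfolding tril_def lin_def by (simp add: lin_simps linKD[OF lk])
    show ?thesis by (rule sw_coassoc[OF t, symmetric])
  qed
  also have "\<dots> = sw h (\<lambda>u c. s (\<epsilon> u) (s (l x) c))"
  proof (rule sw_cong)
    fix u c
    have li: "lin (\<lambda>z. s (l (x * S z)) c)" unfolding lin_def by (simp add: lin_simps linKD[OF lk])
    show "sw u (\<lambda>a p. s (l (x * S (S p) * S a)) c) = s (\<epsilon> u) (s (l x) c)"
      using sw_anti_r[OF li, of u] by (simp add: S_mult S_one mult.assoc)
  qed
  also have "\<dots> = s (l x) h"
  proof -
    have "lin (\<lambda>c. s (l x) c)" unfolding lin_def by (simp add: lin_simps)
    then show ?thesis by (rule sw_counit_l)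
  qed
  finally show ?thesis .
qed

lemma Q_zero: "Q x (\<lambda>w. 0) = 0"
  unfolding Q_def Tm_def by (simp add: sw_zero_f sw_zero_x)

lemma int_kill:
  assumes l: "integral l" and lx: "l x \<noteq> 0" and Sh: "S h = 0"
  shows "h = 0"
proof -
  have lk: "linK l" using l unfolding integral_def by auto
  have "s (l x) h = Q x (\<lambda>w. l (w * S h))" by (rule Q_int[OF l, symmetric])
  also have "\<dots> = 0" by (simp add: Sh linK_zero[OF lk] Q_zero)
  finally show ?thesis using lx by simp
qed

definition Pm :: "('h \<Rightarrow> 'k) \<Rightarrow> 'h \<Rightarrow> 'k" where
  "Pm m x = (\<Sum>c\<in>Bs. coord c (x * S (S (Tm m c))))"

lemma linK_Pm: "linK (Pm m)" unfolding linK_def Pm_def by (simp add: lin_simps sum.distrib sum_distrib_left)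

lemma reconstruct:
  assumes m: "linK m"
  shows "m x = (\<Sum>c\<in>Bs. Pm (coord c) (x * S (Tm m c)))"
proof -
  have "s (\<Sum>c\<in>Bs. Pm (coord c) (x * S (Tm m c))) 1 =
    (\<Sum>c\<in>Bs. \<Sum>b\<in>Bs. s (coord b (x * S (Tm m c) * S (S (sw b (\<lambda>b1 b2. s (coord c b2) b1))))) 1)"
    unfolding Pm_def Tm_def by (simp add: vs.scale_sum_left)
  also have "\<dots> = (\<Sum>c\<in>Bs. \<Sum>b\<in>Bs. sw b (\<lambda>b1 b2. s (coord c b2 * coord b (x * S (Tm m c) * S (S b1))) 1))"
  proof (intro sum.cong refl)
    fix c b
    have g: "linK (\<lambda>z. coord b (x * S (Tm m c) * S (S z)))" unfolding linK_def by (simp add: lin_simps)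
    show "s (coord b (x * S (Tm m c) * S (S (sw b (\<lambda>b1 b2. s (coord c b2) b1))))) 1 =
      sw b (\<lambda>b1 b2. s (coord c b2 * coord b (x * S (Tm m c) * S (S b1))) 1)"
      by (subst sw_linK_scalar[OF g]) (simp add: lin_simps)
  qed
  also have "\<dots> = (\<Sum>b\<in>Bs. sw b (\<lambda>b1 b2. s (\<Sum>c\<in>Bs. coord c b2 * coord b (x * S (Tm m c) * S (S b1))) 1))"
    by (subst sum.swap) (simp add: sw_sum_f[symmetric] vs.scale_sum_left)
  also have "\<dots> = (\<Sum>b\<in>Bs. sw b (\<lambda>b1 b2. s (coord b (x * S (Tm m b2) * S (S b1))) 1))"
  proof -
    have "(\<Sum>c\<in>Bs. coord c w * coord b (x * S (Tm m c) * S (S b1))) = coord b (x * S (Tm m w) * S (S b1))" for w b b1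
    proof -
      have "linK (\<lambda>c. coord b (x * S (Tm m c) * S (S b1)))" unfolding linK_def by (simp add: lin_simps Tm_add Tm_scale)
      then show ?thesis by (rule linK_expand[symmetric])
    qed
    then show ?thesis by simp
  qed
  also have "\<dots> = (\<Sum>b\<in>Bs. sw b (\<lambda>b1 b2. sw b2 (\<lambda>e f. s (m f * coord b (x * S e * S (S b1))) 1)))"
  proof (intro sum.cong refl sw_cong)
    fix b b1 b2
    have g: "linK (\<lambda>z. coord b (x * S z * S (S b1)))" unfolding linK_def by (simp add: lin_simps)
    show "s (coord b (x * S (Tm m b2) * S (S b1))) 1 = sw b2 (\<lambda>e f. s (m f * coord b (x * S e * S (S b1))) 1)"
      unfolding Tm_def by (subst sw_linK_scalar[OF g]) (simp add: lin_simps mult.commute)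
  qed
  also have "\<dots> = (\<Sum>b\<in>Bs. sw b (\<lambda>g f. sw g (\<lambda>b1 e. s (m f * coord b (x * S e * S (S b1))) 1)))"
  proof (rule sum.cong[OF refl])
    fix b
    have t: "tril (\<lambda>b1 e f. s (m f * coord b (x * S e * S (S b1))) 1)"
      unfolding tril_def lin_def by (simp add: lin_simps linKD[OF m] algebra_simps)
    show "sw b (\<lambda>b1 b2. sw b2 (\<lambda>e f. s (m f * coord b (x * S e * S (S b1))) 1)) =
      sw b (\<lambda>g f. sw g (\<lambda>b1 e. s (m f * coord b (x * S e * S (S b1))) 1))"
      by (rule sw_coassoc[OF t, symmetric])
  qed
  also have "\<dots> = (\<Sum>b\<in>Bs. sw b (\<lambda>g f. s (\<epsilon> g) (s (m f * coord b x) 1)))"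
  proof (intro sum.cong refl sw_cong)
    fix b g f
    have li: "lin (\<lambda>z. s (m f * coord b (x * S z)) 1)" unfolding lin_def by (simp add: lin_simps algebra_simps)
    show "sw g (\<lambda>b1 e. s (m f * coord b (x * S e * S (S b1))) 1) = s (\<epsilon> g) (s (m f * coord b x) 1)"
      using sw_anti_l[OF li, of g] by (simp add: S_mult S_one mult.assoc)
  qed
  also have "\<dots> = (\<Sum>b\<in>Bs. s (m b * coord b x) 1)"
  proof (rule sum.cong[OF refl])
    fix b
    have "lin (\<lambda>f. s (m f * coord b x) 1)" unfolding lin_def by (simp add: lin_simps linKD[OF m] algebra_simps)
    then show "sw b (\<lambda>g f. s (\<epsilon> g) (s (m f * coord b x) 1)) = s (m b * coord b x) 1" by (rule sw_counit_l)
  qed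
  also have "\<dots> = s (m x) 1"
    by (simp add: vs.scale_sum_left[symmetric] linK_expand[OF m, of x] mult.commute)
  finally show ?thesis by simp
qed

end

context hopf begin

lemma lin_sw_body: "(\<And>b f. lin (\<lambda>v. F b f v)) \<Longrightarrow> lin (\<lambda>v. sw r (\<lambda>b f. F b f v))"
  unfolding lin_def by (simp add: sw_add_f sw_scale_f)

lemma Pm_integral:
  assumes m: "linK m"
  shows "Tm (Pm m) y = s (Pm m y) 1"
proof -
  define hc where "hc c = S (Tm m c)" for c
  define Gd where "Gd d w = sw (S (Tm m w)) (\<lambda>a b. s (coord d (y * S a)) b)" for d w
  have linG: "lin (Gd d)" for d unfolding lin_def Gd_def by (simp add: lin_simps Tm_add Tm_scale)
  have S1: "Tm (Pm m) y = (\<Sum>c\<in>Bs. Tm (\<lambda>w. coord c (w * S (hc c))) y)"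
    unfolding Tm_def Pm_def hc_def by (simp add: vs.scale_sum_left sw_sum_f)
  also have "\<dots> = (\<Sum>c\<in>Bs. sw (hc c) (\<lambda>a b. Tm (coord c) (y * S a) * b))"
    by (simp add: rho[OF linK_coord])
  also have "\<dots> = (\<Sum>c\<in>Bs. sw (hc c) (\<lambda>a b. \<Sum>d\<in>Bs. sw d (\<lambda>d1 d2. s (coord c d2) (s (coord d (y * S a)) (d1 * b)))))"
  proof (intro sum.cong refl sw_cong)
    fix c a b
    have "Tm (coord c) (y * S a) = (\<Sum>d\<in>Bs. s (coord d (y * S a)) (Tm (coord c) d))"
      by (rule lin_expand[OF lin_Tm])
    then show "Tm (coord c) (y * S a) * b = (\<Sum>d\<in>Bs. sw d (\<lambda>d1 d2. s (coord c d2) (s (coord d (y * S a)) (d1 * b))))"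
      unfolding Tm_def by (simp add: sum_distrib_right scale_mult_l sw_lin[OF lin_rmult] sw_scale_f[symmetric] vs.scale_scale mult.commute)
  qed
  also have "\<dots> = (\<Sum>d\<in>Bs. \<Sum>c\<in>Bs. sw d (\<lambda>d1 d2. sw (hc c) (\<lambda>a b. s (coord c d2) (s (coord d (y * S a)) (d1 * b)))))"
    by (simp add: sw_sum_f sw_commute[of "hc _"]) (rule sum.swap)
  also have "\<dots> = (\<Sum>d\<in>Bs. sw d (\<lambda>d1 d2. d1 * (\<Sum>c\<in>Bs. s (coord c d2) (Gd d c))))"
  proof (rule sum.cong[OF refl])
    fix d
    show "(\<Sum>c\<in>Bs. sw d (\<lambda>d1 d2. sw (hc c) (\<lambda>a b. s (coord c d2) (s (coord d (y * S a)) (d1 * b))))) =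
      sw d (\<lambda>d1 d2. d1 * (\<Sum>c\<in>Bs. s (coord c d2) (Gd d c)))"
      unfolding Gd_def hc_def
      by (simp add: sw_sum_f[symmetric] sum_distrib_left scale_mult_r sw_lin[OF lin_lmult] sw_scale_f[symmetric] vs.scale_scale)
  qed
  also have "\<dots> = (\<Sum>d\<in>Bs. sw d (\<lambda>d1 d2. d1 * Gd d d2))"
    by (simp add: lin_expand[OF linG, symmetric])
  also have "\<dots> = (\<Sum>d\<in>Bs. sw d (\<lambda>d1 d2. sw d2 (\<lambda>e f. sw e (\<lambda>a b. s (m f) (s (coord d (y * S (S b))) (d1 * S a))))))"
  proof (intro sum.cong refl sw_cong)
    fix d d1 d2
    have bC: "bil (\<lambda>a b. s (coord d (y * S a)) b)" unfolding bil_def lin_def by (simp add: lin_simps)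
    have "Gd d d2 = sw (Tm m d2) (\<lambda>a b. s (coord d (y * S (S b))) (S a))"
      unfolding Gd_def by (simp add: S_comult[OF bC])
    also have "\<dots> = sw d2 (\<lambda>e f. s (m f) (sw e (\<lambda>a b. s (coord d (y * S (S b))) (S a))))"
      unfolding Tm_def by (simp add: sw_sw[symmetric] sw_scale_x)
    finally show "d1 * Gd d d2 = sw d2 (\<lambda>e f. sw e (\<lambda>a b. s (m f) (s (coord d (y * S (S b))) (d1 * S a))))"
      by (simp add: sw_lin[OF lin_lmult] scale_mult_r sw_scale_f[symmetric] vs.scale_scale)
  qed
  also have "\<dots> = (\<Sum>d\<in>Bs. sw d (\<lambda>b f. s (m f) (s (coord d (y * S (S b))) 1)))"
  proof (rule sum.cong[OF refl])
    fix d
    define Z where "Z r v = sw r (\<lambda>b f. s (m f) (s (coord d (y * S (S b))) v))" for r v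
    have t1: "tril (\<lambda>a b f. s (m f) (s (coord d (y * S (S b))) (d1 * S a)))" for d1
      unfolding tril_def lin_def by (simp add: lin_simps linKD[OF m] algebra_simps)
    have t2: "tril (\<lambda>d1 a r. Z r (d1 * S a))"
      unfolding tril_def Z_def
      apply (intro conjI allI lin_sw_body lin_sw_x)
      apply (simp_all add: lin_def lin_simps mult_ac)
      done
    have "sw d (\<lambda>d1 d2. sw d2 (\<lambda>e f. sw e (\<lambda>a b. s (m f) (s (coord d (y * S (S b))) (d1 * S a))))) =
          sw d (\<lambda>d1 d2. sw d2 (\<lambda>a r. Z r (d1 * S a)))"
      unfolding Z_def by (rule sw_cong, rule sw_coassoc[OF t1])
    also have "\<dots> = sw d (\<lambda>u r. sw u (\<lambda>d1 a. Z r (d1 * S a)))"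
      by (rule sw_coassoc[OF t2, symmetric])
    also have "\<dots> = sw d (\<lambda>u r. s (\<epsilon> u) (Z r 1))"
    proof (rule sw_cong)
      fix u r
      have "lin (Z r)" unfolding Z_def by (rule lin_sw_body) (simp add: lin_def lin_simps mult_ac)
      then show "sw u (\<lambda>d1 a. Z r (d1 * S a)) = s (\<epsilon> u) (Z r 1)" by (rule sw_anti_r)
    qed
    also have "\<dots> = Z d 1"
    proof -
      have "lin (\<lambda>r. Z r 1)" unfolding lin_def Z_def by (simp add: lin_simps)
      then show ?thesis by (rule sw_counit_l)
    qed
    finally show "sw d (\<lambda>d1 d2. sw d2 (\<lambda>e f. sw e (\<lambda>a b. s (m f) (s (coord d (y * S (S b))) (d1 * S a))))) =
      sw d (\<lambda>b f. s (m f) (s (coord d (y * S (S b))) 1))" unfolding Z_def .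
  qed
  also have "\<dots> = s (Pm m y) 1"
  proof -
    have "s (coord d (y * S (S (Tm m d)))) 1 = sw d (\<lambda>b f. s (m f) (s (coord d (y * S (S b))) 1))" for d
    proof -
      have g: "linK (\<lambda>z. coord d (y * S (S z)))" unfolding linK_def by (simp add: lin_simps)
      show ?thesis unfolding Tm_def by (subst sw_linK_scalar[OF g]) (simp add: lin_simps)
    qed
    then show ?thesis unfolding Pm_def by (simp add: vs.scale_sum_left)
  qed
  finally show ?thesis .
qed

lemma exists_integral: "\<exists>l. integral l \<and> (\<exists>x. l x \<noteq> 0)"
proof -
  have "\<epsilon> 1 = (\<Sum>c\<in>Bs. Pm (coord c) (1 * S (Tm \<epsilon> c)))" by (rule reconstruct[OF linK_eps])
  then have "(\<Sum>c\<in>Bs. Pm (coord c) (1 * S (Tm \<epsilon> c))) \<noteq> 0" by (simp add: eps_one)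
  then obtain c where "Pm (coord c) (1 * S (Tm \<epsilon> c)) \<noteq> 0" by (meson sum.neutral)
  moreover have "integral (Pm (coord c))"
    unfolding integral_def using linK_Pm Pm_integral[OF linK_coord] by auto
  ultimately show ?thesis by blast
qed

lemma S_inj: "S h = 0 \<Longrightarrow> h = 0"
  using exists_integral int_kill by blast

end

context hopf begin

lemma setprod_eq: "setprod s A B = vs.span {a * b |a b. a \<in> A \<and> b \<in> B}"
  unfolding setprod_def by simp

lemma left_ideal: "x \<in> setprod s UNIV P \<Longrightarrow> h * x \<in> setprod s UNIV P"
proof -
  assume x: "x \<in> setprod s UNIV P"
  have "vs.subspace {x. h * x \<in> setprod s UNIV P}"
    unfolding vs.subspace_def setprod_eq
    by (auto simp: distrib_left scale_mult_r vs.span_add vs.span_scale vs.span_zero)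
  moreover have "{a * b |a b. a \<in> UNIV \<and> b \<in> P} \<subseteq> {x. h * x \<in> setprod s UNIV P}"
    unfolding setprod_eq by (auto intro!: vs.span_base) (metis mult.assoc)
  ultimately show ?thesis using x vs.span_minimal unfolding setprod_eq by blast
qed

lemma right_ideal: "x \<in> setprod s P UNIV \<Longrightarrow> x * h \<in> setprod s P UNIV"
proof -
  assume x: "x \<in> setprod s P UNIV"
  have "vs.subspace {x. x * h \<in> setprod s P UNIV}"
    unfolding vs.subspace_def setprod_eq
    by (auto simp: distrib_right scale_mult_l vs.span_add vs.span_scale vs.span_zero)
  moreover have "{a * b |a b. a \<in> P \<and> b \<in> UNIV} \<subseteq> {x. x * h \<in> setprod s P UNIV}"
    unfolding setprod_eq by (auto intro!: vs.span_base) (metis mult.assoc)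
  ultimately show ?thesis using x vs.span_minimal unfolding setprod_eq by blast
qed

lemma plus_S: "hopf_subalgebra s \<Delta> S K \<Longrightarrow> k \<in> plus_part \<epsilon> K \<Longrightarrow> S k \<in> plus_part \<epsilon> K"
  unfolding plus_part_def hopf_subalgebra_def by (auto simp: eps_S)

lemma S_setprod:
  assumes K: "hopf_subalgebra s \<Delta> S K" and x: "x \<in> setprod s UNIV (plus_part \<epsilon> K)"
  shows "S x \<in> setprod s (plus_part \<epsilon> K) UNIV"
proof -
  have "vs.subspace {x. S x \<in> setprod s (plus_part \<epsilon> K) UNIV}"
    unfolding vs.subspace_def setprod_eq
    by (auto simp: S_add S_scale S_zero vs.span_add vs.span_scale vs.span_zero)
  moreover have "{a * b |a b. a \<in> UNIV \<and> b \<in> plus_part \<epsilon> K} \<subseteq> {x. S x \<in> setprod s (plus_part \<epsilon> K) UNIV}"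
    unfolding setprod_eq using plus_S[OF K] by (auto intro!: vs.span_base simp: S_mult) blast
  ultimately show ?thesis using x vs.span_minimal unfolding setprod_eq by blast
qed

lemma eps_setprod:
  assumes x: "x \<in> setprod s UNIV (plus_part \<epsilon> K)"
  shows "\<epsilon> x = 0"
proof -
  have "vs.subspace {x. \<epsilon> x = 0}"
    unfolding vs.subspace_def by (auto simp: eps_add eps_scale linK_zero[OF linK_eps])
  moreover have "{a * b |a b. a \<in> UNIV \<and> b \<in> plus_part \<epsilon> K} \<subseteq> {x. \<epsilon> x = 0}"
    by (auto simp: eps_mult plus_part_def)
  ultimately show ?thesis using x vs.span_minimal unfolding setprod_eq by blast
qed

lemma S_injective: "inj S"
proof (rule injI)
  fix x y assume "S x = S y"
  moreover have "S x = S (x - y) + S y" by (metis S_add diff_add_cancel)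
  ultimately have "S (x - y) = 0" by simp
  then have "x - y = 0" by (rule S_inj)
  then show "x = y" by simp
qed

end

context hopf begin

lemma teq_zero: "teq s (\<Delta> 0) []"
  unfolding teq_def
proof (intro allI impI)
  fix f g :: "'h \<Rightarrow> 'k" assume fg: "lfun s f \<and> lfun s g"
  have "tpair f g (\<Delta> (s 0 0)) = tpair f g (map (\<lambda>(a, b). (s 0 a, b)) (\<Delta> 0))"
    using ax_teq_scale fg unfolding teq_def by blast
  also have "\<dots> = 0" using tpair_scale[where c=0 and f=f] fg lfun_linK by simp
  finally show "tpair f g (\<Delta> 0) = tpair f g []" by (simp add: tpair_def)
qed

lemma teq_app: "teq s (\<Delta> x) ys1 \<Longrightarrow> teq s (\<Delta> y) ys2 \<Longrightarrow> teq s (\<Delta> (x + y)) (ys1 @ ys2)"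
  using ax_teq_add[of x y] unfolding teq_def by (simp add: tpair_append)

lemma teq_sc: "teq s (\<Delta> x) ys \<Longrightarrow> teq s (\<Delta> (s c x)) (map (\<lambda>(a, b). (s c a, b)) ys)"
  using ax_teq_scale[of c x] unfolding teq_def by (simp add: tpair_scale lfun_linK)

lemma tp_concat: "tpair f g (concat (map F xs)) = (\<Sum>x\<leftarrow>xs. tpair f g (F x))"
  unfolding tpair_def by (induct xs) auto

lemma tp_concat2: "tpair f g (concat (map (\<lambda>(a, b). F a b) xs)) = (\<Sum>(a, b)\<leftarrow>xs. tpair f g (F a b))"
  unfolding tpair_def by (induct xs) auto

lemma tp_map: "tpair f g (map (\<lambda>(p, q). (u p, v q)) ks) = (\<Sum>(p, q)\<leftarrow>ks. f (u p) * g (v q))"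
  unfolding tpair_def by (induct ks) auto

lemma sum_list_cp_diff: "(\<Sum>(p, q)\<leftarrow>ks. F p q - G p q) = (\<Sum>(p, q)\<leftarrow>ks. F p q) - (\<Sum>(p, q)\<leftarrow>ks. (G p q :: 'k))"
  by (induct ks) auto

lemma sum_list_cp_add: "(\<Sum>(p, q)\<leftarrow>ks. F p q + G p q) = (\<Sum>(p, q)\<leftarrow>ks. F p q) + (\<Sum>(p, q)\<leftarrow>ks. (G p q :: 'k))"
  by (induct ks) auto

lemma sum_list_cp_mult: "(\<Sum>(p, q)\<leftarrow>ks. c * F p q) = c * (\<Sum>(p, q)\<leftarrow>ks. (F p q :: 'k))"
  by (induct ks) (auto simp: algebra_simps)

lemma linK_diff: "linK f \<Longrightarrow> f (u - v) = f u - f v"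
  by (metis linKD(1) diff_add_cancel eq_diff_eq)

lemma lk_sum: "linK G \<Longrightarrow> (\<Sum>(p, q)\<leftarrow>xs. \<epsilon> p * G q) = G (\<Sum>(p, q)\<leftarrow>xs. s (\<epsilon> p) q)"
  by (induct xs) (auto simp: linK_zero linKD)

lemma coideal_gen:
  assumes K: "hopf_subalgebra s \<Delta> S K" and k: "k \<in> plus_part \<epsilon> K"
  shows "\<exists>ys. (\<forall>(a, b)\<in>set ys. a \<in> setprod s UNIV (plus_part \<epsilon> K) \<or> b \<in> setprod s UNIV (plus_part \<epsilon> K))
     \<and> teq s (\<Delta> (h * k)) ys"
proof -
  let ?J = "setprod s UNIV (plus_part \<epsilon> K)"
  have kK: "k \<in> K" and ek: "\<epsilon> k = 0" using k unfolding plus_part_def by auto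
  have subK: "vs.subspace K" and oneK: "1 \<in> K" using K unfolding hopf_subalgebra_def by auto
  obtain ks where ks: "set ks \<subseteq> K \<times> K" "teq s (\<Delta> k) ks" using K kK unfolding hopf_subalgebra_def by blast
  define ys where "ys = concat (map (\<lambda>(a, b). map (\<lambda>(p, q). (a * (p - s (\<epsilon> p) 1), b * q)) ks) (\<Delta> h))
      @ map (\<lambda>(a, b). (a, b * k)) (\<Delta> h)"
  have mem: "\<forall>(a, b)\<in>set ys. a \<in> ?J \<or> b \<in> ?J"
  proof -
    have "a * (p - s (\<epsilon> p) 1) \<in> ?J" if "p \<in> K" for a p
    proof -
      have "p - s (\<epsilon> p) 1 \<in> K" using that subK oneK by (simp add: vs.subspace_diff vs.subspace_scale)
      moreover have "\<epsilon> (p - s (\<epsilon> p) 1) = 0"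
        using eps_add[of p "- s (\<epsilon> p) 1"] eps_scale[of "- \<epsilon> p" 1] by (simp add: eps_one)
      ultimately show ?thesis unfolding setprod_eq plus_part_def by (auto intro!: vs.span_base)
    qed
    moreover have "b * k \<in> ?J" for b unfolding setprod_eq using k by (auto intro!: vs.span_base)
    ultimately show ?thesis using ks(1) unfolding ys_def by auto
  qed
  have "teq s (\<Delta> (h * k)) ys"
    unfolding teq_def
  proof (intro allI impI)
    fix f g :: "'h \<Rightarrow> 'k" assume fg: "lfun s f \<and> lfun s g"
    then have f: "linK f" and g: "linK g" using lfun_linK by auto
    have lm: "lfun s (\<lambda>p. f (a * p))" "lfun s (\<lambda>q. g (b * q))" for a b
      unfolding lfun_linK linK_def using f g by (auto simp: linKD distrib_left scale_mult_r)
    have inner1: "(\<Sum>(p, q)\<leftarrow>\<Delta> k. f (a * p) * g (b * q)) = (\<Sum>(p, q)\<leftarrow>ks. f (a * p) * g (b * q))" for a b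
      using ks(2) lm(1)[of a] lm(2)[of b] unfolding teq_def tpair_def by auto
    have inner2: "(\<Sum>(p, q)\<leftarrow>ks. \<epsilon> p * g (b * q)) = g (b * k)" for b
    proof -
      have "(\<Sum>(p, q)\<leftarrow>ks. \<epsilon> p * g (b * q)) = (\<Sum>(p, q)\<leftarrow>\<Delta> k. \<epsilon> p * g (b * q))"
        using ks(2) lm(2)[of b] ax_eps unfolding teq_def tpair_def by auto
      also have "\<dots> = g (b * (\<Sum>(p, q)\<leftarrow>\<Delta> k. s (\<epsilon> p) q))"
      proof -
        have gb: "linK (\<lambda>q. g (b * q))" using lm(2)[of b] lfun_linK by auto
        show ?thesis using lk_sum[OF gb, of "\<Delta> k"] by simp
      qed
      also have "\<dots> = g (b * k)" by (simp add: ax_counit_l)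
      finally show ?thesis .
    qed
    have inner3: "(\<Sum>(p, q)\<leftarrow>ks. \<epsilon> p * (f a * g (b * q))) = f a * g (b * k)" for a b
    proof -
      have "(\<Sum>(p, q)\<leftarrow>ks. \<epsilon> p * (f a * g (b * q))) = (\<Sum>(p, q)\<leftarrow>ks. f a * (\<epsilon> p * g (b * q)))"
        by (simp add: mult.left_commute)
      also have "\<dots> = f a * g (b * k)" by (simp only: sum_list_cp_mult inner2)
      finally show ?thesis .
    qed
    have fsub: "f (a * (p - s (\<epsilon> p) 1)) = f (a * p) - \<epsilon> p * f a" for a p
    proof -
      have "a * (p - s (\<epsilon> p) 1) = a * p - s (\<epsilon> p) a"
        by (simp add: right_diff_distrib scale_mult_r)
      then show ?thesis by (simp add: linK_diff[OF f] linKD[OF f])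
    qed
    have "tpair f g ys = (\<Sum>(a, b)\<leftarrow>\<Delta> h. \<Sum>(p, q)\<leftarrow>ks. f (a * (p - s (\<epsilon> p) 1)) * g (b * q))
        + (\<Sum>(a, b)\<leftarrow>\<Delta> h. f a * g (b * k))"
      unfolding ys_def tpair_append tp_concat2 tp_map by (rule refl)
    also have "\<dots> = (\<Sum>(a, b)\<leftarrow>\<Delta> h. (\<Sum>(p, q)\<leftarrow>\<Delta> k. f (a * p) * g (b * q)) - f a * g (b * k))
        + (\<Sum>(a, b)\<leftarrow>\<Delta> h. f a * g (b * k))"
      by (simp add: fsub left_diff_distrib sum_list_cp_diff inner1 mult.assoc sum_list_cp_mult inner2 inner3)
    also have "\<dots> = (\<Sum>(a, b)\<leftarrow>\<Delta> h. \<Sum>(p, q)\<leftarrow>\<Delta> k. f (a * p) * g (b * q))"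
      by (simp add: sum_list_cp_add[symmetric])
    also have "\<dots> = tpair f g (concat (map (\<lambda>(a, b). map (\<lambda>(a', b'). (a * a', b * b')) (\<Delta> k)) (\<Delta> h)))"
      unfolding tp_concat2 tp_map by (rule refl)
    also have "\<dots> = tpair f g (\<Delta> (h * k))" using ax_mult fg unfolding teq_def by metis
    finally show "tpair f g (\<Delta> (h * k)) = tpair f g ys" by simp
  qed
  then show ?thesis using mem by blast
qed

end

context hopf begin

lemma setprod_ideal:
  assumes K: "hopf_subalgebra s \<Delta> S K"
    and N: "setprod s UNIV (plus_part \<epsilon> K) = setprod s (plus_part \<epsilon> K) UNIV"
  shows "hopf_ideal s \<Delta> \<epsilon> S (setprod s UNIV (plus_part \<epsilon> K))"
proof -
  let ?J = "setprod s UNIV (plus_part \<epsilon> K)"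
  let ?C = "{x. \<exists>ys. (\<forall>(a, b)\<in>set ys. a \<in> ?J \<or> b \<in> ?J) \<and> teq s (\<Delta> x) ys}"
  have sJ: "vs.subspace ?J" unfolding setprod_eq by simp
  have sC: "vs.subspace ?C"
  proof (rule vs.subspaceI)
    show "0 \<in> ?C" using teq_zero by (intro CollectI exI[of _ "[]"]) auto
  next
    fix x y assume "x \<in> ?C" "y \<in> ?C"
    then obtain ys1 ys2 where "\<forall>(a, b)\<in>set ys1. a \<in> ?J \<or> b \<in> ?J" "teq s (\<Delta> x) ys1"
      "\<forall>(a, b)\<in>set ys2. a \<in> ?J \<or> b \<in> ?J" "teq s (\<Delta> y) ys2" by blast
    then show "x + y \<in> ?C" using teq_app by (intro CollectI exI[of _ "ys1 @ ys2"]) auto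
  next
    fix c x assume "x \<in> ?C"
    then obtain ys where ys: "\<forall>(a, b)\<in>set ys. a \<in> ?J \<or> b \<in> ?J" "teq s (\<Delta> x) ys" by blast
    have "\<forall>(a, b)\<in>set (map (\<lambda>(a, b). (s c a, b)) ys). a \<in> ?J \<or> b \<in> ?J"
      using ys(1) vs.subspace_scale[OF sJ] by auto
    then show "s c x \<in> ?C" using teq_sc[OF ys(2)] by blast
  qed
  have gen: "{a * b |a b. a \<in> UNIV \<and> b \<in> plus_part \<epsilon> K} \<subseteq> ?C"
    using coideal_gen[OF K] by blast
  have co: "\<forall>x\<in>?J. \<exists>ys. (\<forall>(a, b)\<in>set ys. a \<in> ?J \<or> b \<in> ?J) \<and> teq s (\<Delta> x) ys"
    using vs.span_minimal[OF gen sC] unfolding setprod_eq by blast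
  have id: "\<forall>h x. x \<in> ?J \<longrightarrow> h * x \<in> ?J \<and> x * h \<in> ?J"
    using left_ideal right_ideal N by metis
  have ep: "\<forall>x\<in>?J. \<epsilon> x = 0" using eps_setprod by blast
  have Sst: "S ` ?J \<subseteq> ?J" using S_setprod[OF K] N by auto
  show ?thesis unfolding hopf_ideal_def using sJ id co ep Sst by auto
qed

lemma normal_part2:
  assumes K: "hopf_subalgebra s \<Delta> S K"
    and Iid: "hopf_ideal s \<Delta> \<epsilon> S (setprod s UNIV (plus_part \<epsilon> K))"
  shows "setprod s UNIV (plus_part \<epsilon> K) = setprod s (plus_part \<epsilon> K) UNIV"
proof -
  let ?I = "setprod s UNIV (plus_part \<epsilon> K)"
  let ?J = "setprod s (plus_part \<epsilon> K) UNIV"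
  interpret fd: finite_dimensional_vector_space s Bs by unfold_locales (use Bs in auto)
  interpret fp: finite_dimensional_vector_space_pair_1 s Bs s by unfold_locales
  have sI: "vs.subspace ?I" and sJ: "vs.subspace ?J" unfolding setprod_eq by simp_all
  have JI: "?J \<subseteq> ?I"
  proof -
    have "{a * b |a b. a \<in> plus_part \<epsilon> K \<and> b \<in> UNIV} \<subseteq> ?I"
    proof safe
      fix a b assume "a \<in> plus_part \<epsilon> K"
      then have "1 * a \<in> ?I" unfolding setprod_eq by (intro vs.span_base) blast
      then show "a * b \<in> ?I" using Iid unfolding hopf_ideal_def by simp
    qed
    then show ?thesis using vs.span_minimal[OF _ sI] unfolding setprod_eq[of "plus_part \<epsilon> K"] by blast
  qed
  have SIJ: "S ` ?I \<subseteq> ?J" using S_setprod[OF K] by auto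
  have "vs.dim (S ` ?I) = vs.dim ?I"
    using fp.dim_image_eq[OF ax_S] S_injective by (simp add: inj_on_def inj_def)
  moreover have "vs.dim (S ` ?I) \<le> vs.dim ?J" using fd.dim_subset[OF SIJ] .
  ultimately have "vs.dim ?I \<le> vs.dim ?J" by simp
  then have "?J = ?I" using fd.subspace_dim_equal[OF sJ sI JI] by simp
  then show ?thesis by simp
qed

end

theorem mainTheorem11:
  fixes scale :: "'k::field \<Rightarrow> 'h::ring_1 \<Rightarrow> 'h"
    and \<Delta> :: "'h \<Rightarrow> ('h \<times> 'h) list" and \<epsilon> :: "'h \<Rightarrow> 'k" and S :: "'h \<Rightarrow> 'h"
    and R I :: "'h set"
  assumes H: "hopf_algebra scale \<Delta> \<epsilon> S"
    and R: "hopf_subalgebra scale \<Delta> S R"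
    and I: "hopf_ideal scale \<Delta> \<epsilon> S I"
    and I_sub: "I \<subseteq> setprod scale (plus_part \<epsilon> R) UNIV"
    and I_max: "\<And>J. hopf_ideal scale \<Delta> \<epsilon> S J \<Longrightarrow> J \<subseteq> setprod scale (plus_part \<epsilon> R) UNIV
                  \<Longrightarrow> J \<subseteq> I"
  shows "(\<forall>K. normal_hopf_subalgebra scale \<Delta> \<epsilon> S K \<and> K \<subseteq> R \<and>
              (\<forall>K'. normal_hopf_subalgebra scale \<Delta> \<epsilon> S K' \<and> K' \<subseteq> R \<longrightarrow> K' \<subseteq> K)
           \<longrightarrow> setprod scale UNIV (plus_part \<epsilon> K) \<subseteq> I)
       \<and> (\<forall>K. hopf_subalgebra scale \<Delta> S K \<and> K \<subseteq> R \<and> I = setprod scale UNIV (plus_part \<epsilon> K)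
           \<longrightarrow> normal_hopf_subalgebra scale \<Delta> \<epsilon> S K)"
proof -
  interpret hopf scale \<Delta> \<epsilon> S by unfold_locales (rule H)
  show ?thesis
  proof (intro conjI allI impI)
    fix K assume a: "normal_hopf_subalgebra scale \<Delta> \<epsilon> S K \<and> K \<subseteq> R \<and>
              (\<forall>K'. normal_hopf_subalgebra scale \<Delta> \<epsilon> S K' \<and> K' \<subseteq> R \<longrightarrow> K' \<subseteq> K)"
    then have K: "hopf_subalgebra scale \<Delta> S K"
      and N: "setprod scale UNIV (plus_part \<epsilon> K) = setprod scale (plus_part \<epsilon> K) UNIV"
      and KR: "K \<subseteq> R"
      unfolding normal_hopf_subalgebra_def by auto
    have hi: "hopf_ideal scale \<Delta> \<epsilon> S (setprod scale UNIV (plus_part \<epsilon> K))"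
      by (rule setprod_ideal[OF K N])
    have "setprod scale (plus_part \<epsilon> K) UNIV \<subseteq> setprod scale (plus_part \<epsilon> R) UNIV"
      unfolding setprod_eq using KR unfolding plus_part_def by (intro vs.span_mono) blast
    then have "setprod scale UNIV (plus_part \<epsilon> K) \<subseteq> setprod scale (plus_part \<epsilon> R) UNIV" using N by simp
    then show "setprod scale UNIV (plus_part \<epsilon> K) \<subseteq> I" using I_max[OF hi] by blast
  next
    fix K assume a: "hopf_subalgebra scale \<Delta> S K \<and> K \<subseteq> R \<and> I = setprod scale UNIV (plus_part \<epsilon> K)"
    then have "setprod scale UNIV (plus_part \<epsilon> K) = setprod scale (plus_part \<epsilon> K) UNIV"
      using normal_part2 I by auto
    then show "normal_hopf_subalgebra scale \<Delta> \<epsilon> S K" using a unfolding normal_hopf_subalgebra_def by auto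
  qed
qed

end
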